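(* There exist an integer $m\ge 3$, parameters $\beta,\beta',p,p'\in[0,1]$ and $\pi\in(0,1)$ such that the games $G(m,\beta,\beta')$ and $G(m,p,p')$ are both losing games, while their random mixture $G(m,\pi p+(1-\pi)\beta,\ \pi p'+(1-\pi)\beta')$ is a winning game.
   Context: For $m\ge1$ and $a,a'\in[0,1]$, the Parrondo game $G(m,a,a')$ is the Markov chain $\{S_n\}$ on $\mathbb{Z}$ with $S_0=0$, steps $S_{n+1}-S_n\in\{-1,+1\}$, and $P(S_{n+1}-S_n=1\mid S_0,\dots,S_n)=a'\,1_{[S_n\in m\mathbb{Z}]}+a\,1_{[S_n\notin m\mathbb{Z}]}$. A game is called winning, losing, or fair according as the almost sure limit of $S_n/n$ is positive, negative, or zero. The random mixture with mixing probability $\pi$ corresponds to choosing, independently at each play, the first game with probability $\pi$ and the second with probability $1-\pi$. *)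

theory Defs
  imports "HOL-Probability.Probability"
begin

text \<open>Probability space: an i.i.d. sequence of Uniform[0,1] random variables.
  The Parrondo chain is realised on it by stepping +1 iff the n-th uniform
  is below the current success probability, which gives exactly the
  transition law of G(m,a,a').\<close>

definition unif_seq_space :: "(nat \<Rightarrow> real) measure" where
  "unif_seq_space = PiM UNIV (\<lambda>_. uniform_measure lborel {0..1::real})"

definition parrondo_prob :: "nat \<Rightarrow> real \<Rightarrow> real \<Rightarrow> int \<Rightarrow> real" where
  "parrondo_prob m a a' s = (if int m dvd s then a' else a)"

fun parrondo_walk :: "nat \<Rightarrow> real \<Rightarrow> real \<Rightarrow> (nat \<Rightarrow> real) \<Rightarrow> nat \<Rightarrow> int" where
  "parrondo_walk m a a' \<omega> 0 = 0"
| "parrondo_walk m a a' \<omega> (Suc n) =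
     parrondo_walk m a a' \<omega> n +
     (if \<omega> n < parrondo_prob m a a' (parrondo_walk m a a' \<omega> n) then 1 else -1)"

definition winning_game :: "nat \<Rightarrow> real \<Rightarrow> real \<Rightarrow> bool" where
  "winning_game m a a' \<longleftrightarrow>
     (AE \<omega> in unif_seq_space. \<exists>L>0.
        (\<lambda>n. real_of_int (parrondo_walk m a a' \<omega> n) / real n) \<longlonglongrightarrow> L)"

definition losing_game :: "nat \<Rightarrow> real \<Rightarrow> real \<Rightarrow> bool" where
  "losing_game m a a' \<longleftrightarrow>
     (AE \<omega> in unif_seq_space. \<exists>L<0.
        (\<lambda>n. real_of_int (parrondo_walk m a a' \<omega> n) / real n) \<longlonglongrightarrow> L)"

end

theory Submission imports Defs begin

definition U :: "real measure" where "U = uniform_measure lborel {0..1}"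

lemma prob_U: "prob_space U"
  unfolding U_def by (rule prob_space_uniform_measure) auto

interpretation S: sequence_space U
  unfolding sequence_space_def product_prob_space_def product_sigma_finite_def
  using prob_U by (auto simp: prob_space_imp_sigma_finite product_prob_space_axioms_def)

lemma unif_eq: "unif_seq_space = S.S"
  unfolding unif_seq_space_def U_def by simp

lemma sets_U[simp, measurable_cong]: "sets U = sets borel"
  unfolding U_def by simp

lemma walk_meas[measurable]:
  "(\<lambda>\<omega>. parrondo_walk m a a' \<omega> n) \<in> S.S \<rightarrow>\<^sub>M count_space UNIV"
proof (induction n)
  case 0 then show ?case by simp
next
  case (Suc n)
  have "(\<lambda>\<omega>. (\<lambda>s \<omega>. s + (if \<omega> n < parrondo_prob m a a' s then 1 else -1)) (parrondo_walk m a a' \<omega> n) \<omega>)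
        \<in> S.S \<rightarrow>\<^sub>M count_space UNIV"
    by (rule measurable_compose_countable[OF _ Suc]) measurable
  then show ?case by simp
qed

lemma walk_dep:
  "(\<And>i. i < n \<Longrightarrow> \<omega> i = \<omega>' i) \<Longrightarrow> parrondo_walk m a a' \<omega> n = parrondo_walk m a a' \<omega>' n"
  by (induction n) auto

lemma walk_bound: "\<bar>parrondo_walk m a a' \<omega> n\<bar> \<le> int n"
  by (induction n) auto

interpretation SS: pair_prob_space S.S S.S
  by (simp add: pair_prob_space_def pair_sigma_finite_def S.prob_space_axioms
      prob_space_imp_sigma_finite)

lemma measure_U_less:
  assumes "0 \<le> c" "c \<le> 1"
  shows "measure U {..<c} = c"
proof -
  have "measure U {..<c} = measure lborel ({0..1} \<inter> {..<c}) / measure lborel {0..1::real}"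
    unfolding U_def by (subst measure_uniform_measure) auto
  also have "{0..1} \<inter> {..<c} = {0..<c}" using assms by auto
  finally show ?thesis using assms by simp
qed

lemma integral_U_if:
  assumes "0 \<le> c" "c \<le> 1"
  shows "(\<integral>u. (if u < c then x else y) \<partial>U) = c * x + (1 - c) * (y::real)"
proof -
  interpret UP: prob_space U by (rule prob_U)
  have "(\<lambda>u. if u < c then x else y) = (\<lambda>u. y + (x - y) * indicator {..<c} u)"
    by (auto simp: indicator_def)
  then have "(\<integral>u. (if u < c then x else y) \<partial>U) = (\<integral>u. y + (x - y) * indicator {..<c} u \<partial>U)"
    by simp
  also have "\<dots> = y + (x - y) * measure U {..<c}"
  proof -
    have "integrable U (indicat_real {..<c})"
      by (rule S.M.integrable_const_bound[where B=1]) auto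
    then show ?thesis
      by (subst Bochner_Integration.integral_add) (auto simp: prob_space.prob_space[OF prob_U])
  qed
  also have "\<dots> = c * x + (1 - c) * y" using measure_U_less[OF assms] by (simp add: algebra_simps)
  finally show ?thesis .
qed

lemma key:
  fixes G :: "(nat \<Rightarrow> real) \<Rightarrow> real" and A B q :: "int \<Rightarrow> real"
  assumes G[measurable]: "G \<in> borel_measurable S.S"
  and Gdep: "\<And>\<omega> \<omega>'. G (comb_seq n \<omega> \<omega>') = G \<omega>"
  and Gb: "\<And>\<omega>. \<bar>G \<omega>\<bar> \<le> BG"
  and Ab: "\<And>s. \<bar>A s\<bar> \<le> C" and Bb: "\<And>s. \<bar>B s\<bar> \<le> C"
  and q0: "\<And>s. 0 \<le> q s" and q1: "\<And>s. q s \<le> 1"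
  and zero: "\<And>s. q s * A s + (1 - q s) * B s = 0"
  shows "(\<integral>\<omega>. G \<omega> * (if \<omega> n < q (parrondo_walk m a a' \<omega> n)
            then A (parrondo_walk m a a' \<omega> n) else B (parrondo_walk m a a' \<omega> n)) \<partial>S.S) = 0"
proof -
  define W where "W \<omega> = parrondo_walk m a a' \<omega> n" for \<omega>
  define f where "f \<omega> = G \<omega> * (if \<omega> n < q (W \<omega>) then A (W \<omega>) else B (W \<omega>))" for \<omega>
  have Wm[measurable]: "W \<in> S.S \<rightarrow>\<^sub>M count_space UNIV" unfolding W_def by measurable
  have Psim: "(\<lambda>\<omega>. (\<lambda>s \<omega>. if \<omega> n < q s then A s else B s) (W \<omega>) \<omega>) \<in> borel_measurable S.S"
    by (rule measurable_compose_countable[OF _ Wm]) measurable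
  have fm[measurable]: "f \<in> borel_measurable S.S"
    unfolding f_def using Psim by measurable
  have cm[measurable]: "(\<lambda>(\<omega>, \<omega>'). comb_seq n \<omega> \<omega>') \<in> S.S \<Otimes>\<^sub>M S.S \<rightarrow>\<^sub>M S.S"
    by (rule measurable_comb_seq)
  have Wc: "W (comb_seq n \<omega> \<omega>') = W \<omega>" for \<omega> \<omega>'
    unfolding W_def by (rule walk_dep) (simp add: comb_seq_less)
  have cn: "comb_seq n \<omega> \<omega>' n = \<omega>' 0" for \<omega> \<omega>' :: "nat \<Rightarrow> real"
    using comb_seq_add[of n \<omega> \<omega>' 0] by simp
  have fb: "\<bar>f \<omega>\<bar> \<le> BG * C" for \<omega>
    unfolding f_def abs_mult
    by (rule mult_mono) (use Gb Ab Bb in \<open>auto intro: order.trans[OF abs_ge_zero]\<close>)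
  have "integral\<^sup>L S.S f = integral\<^sup>L (distr (S.S \<Otimes>\<^sub>M S.S) S.S (\<lambda>(\<omega>, \<omega>'). comb_seq n \<omega> \<omega>')) f"
    by (simp add: S.PiM_comb_seq)
  also have "\<dots> = (\<integral>x. f (case x of (\<omega>, \<omega>') \<Rightarrow> comb_seq n \<omega> \<omega>') \<partial>(S.S \<Otimes>\<^sub>M S.S))"
    by (rule integral_distr) measurable
  also have "\<dots> = (\<integral>x. (\<lambda>(\<omega>, \<omega>'). f (comb_seq n \<omega> \<omega>')) x \<partial>(S.S \<Otimes>\<^sub>M S.S))"
    by (simp add: split_beta')
  also have "\<dots> = (\<integral>\<omega>. (\<integral>\<omega>'. (\<lambda>(\<omega>, \<omega>'). f (comb_seq n \<omega> \<omega>')) (\<omega>, \<omega>') \<partial>S.S) \<partial>S.S)"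
  proof (rule SS.integral_fst'[symmetric])
    show "integrable (S.S \<Otimes>\<^sub>M S.S) (\<lambda>(\<omega>, \<omega>'). f (comb_seq n \<omega> \<omega>'))"
      by (rule SS.integrable_const_bound[where B="BG * C"]) (use fb in auto)
  qed
  also have "\<dots> = (\<integral>\<omega>. (\<integral>\<omega>'. f (comb_seq n \<omega> \<omega>') \<partial>S.S) \<partial>S.S)"
    by simp
  also have "\<dots> = (\<integral>\<omega>. 0 \<partial>S.S)"
  proof (rule Bochner_Integration.integral_cong[OF refl])
    fix \<omega> :: "nat \<Rightarrow> real"
    have "(\<integral>\<omega>'. f (comb_seq n \<omega> \<omega>') \<partial>S.S)
        = (\<integral>\<omega>'. G \<omega> * (\<lambda>u. if u < q (W \<omega>) then A (W \<omega>) else B (W \<omega>)) (\<omega>' 0) \<partial>S.S)"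
      unfolding f_def Wc cn Gdep by simp
    also have "\<dots> = G \<omega> * (\<integral>\<omega>'. (\<lambda>u. if u < q (W \<omega>) then A (W \<omega>) else B (W \<omega>)) (\<omega>' 0) \<partial>S.S)"
      by simp
    also have "(\<integral>\<omega>'. (\<lambda>u. if u < q (W \<omega>) then A (W \<omega>) else B (W \<omega>)) (\<omega>' 0) \<partial>S.S)
        = (\<integral>u. (if u < q (W \<omega>) then A (W \<omega>) else B (W \<omega>)) \<partial>distr S.S U (\<lambda>\<omega>. \<omega> 0))"
      by (rule integral_distr[symmetric]) measurable
    also have "distr S.S U (\<lambda>\<omega>. \<omega> 0) = U"
      by (rule distr_PiM_component) (auto simp: prob_U)
    also have "(\<integral>u. (if u < q (W \<omega>) then A (W \<omega>) else B (W \<omega>)) \<partial>U) = 0"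
      using integral_U_if[OF q0 q1] zero by simp
    finally show "(\<integral>\<omega>'. f (comb_seq n \<omega> \<omega>') \<partial>S.S) = 0" by simp
  qed
  finally show ?thesis unfolding f_def W_def by simp
qed

definition Mt :: "nat \<Rightarrow> real \<Rightarrow> real \<Rightarrow> (int \<Rightarrow> real) \<Rightarrow> real \<Rightarrow> nat \<Rightarrow> (nat \<Rightarrow> real) \<Rightarrow> real" where
  "Mt m a a' h \<mu> n \<omega> = real_of_int (parrondo_walk m a a' \<omega> n) + h (parrondo_walk m a a' \<omega> n) - h 0 - \<mu> * real n"

definition Dd :: "nat \<Rightarrow> real \<Rightarrow> real \<Rightarrow> (int \<Rightarrow> real) \<Rightarrow> real \<Rightarrow> nat \<Rightarrow> (nat \<Rightarrow> real) \<Rightarrow> real" where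
  "Dd m a a' h \<mu> n \<omega> = (if \<omega> n < parrondo_prob m a a' (parrondo_walk m a a' \<omega> n)
      then 1 + h (parrondo_walk m a a' \<omega> n + 1) - h (parrondo_walk m a a' \<omega> n) - \<mu>
      else -1 + h (parrondo_walk m a a' \<omega> n - 1) - h (parrondo_walk m a a' \<omega> n) - \<mu>)"

lemma aux_div: fixes K e x :: real assumes "0<e" "0<x" shows "K * x^2 / (e*x)^4 = K / e^4 * inverse (x^2)"
proof -
  have "(e*x)^4 = e^4 * x^2 * x^2" by (simp add: power_mult_distrib power2_eq_square power4_eq_xxxx mult_ac)
  then show ?thesis using assms by (simp add: field_simps)
qed

lemma pow4_ineq:
  fixes x d C :: real
  assumes "\<bar>d\<bar> \<le> C"
  shows "(x + d) ^ 4 \<le> x ^ 4 + 4 * (x ^ 3 * d) + (6 * C^2 + 4 * C^3) * x^2 + (4 * C^3 + C^4)"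
proof -
  have C0: "0 \<le> C" using assms by linarith
  have e: "(x + d) ^ 4 = x ^ 4 + 4 * (x ^ 3 * d) + 6 * x^2 * d^2 + 4 * x * d^3 + d^4"
    by algebra
  have d2: "d^2 \<le> C^2" using assms by (metis abs_ge_zero power2_abs power_mono)
  have "6 * x^2 * d^2 \<le> 6 * x^2 * C^2" using d2 by (simp add: mult_left_mono)
  moreover have "4 * x * d^3 \<le> 4 * C^3 * (1 + x^2)"
  proof -
    have "\<bar>x * d^3\<bar> = \<bar>x\<bar> * \<bar>d\<bar>^3" by (simp add: abs_mult power_abs)
    also have "\<dots> \<le> \<bar>x\<bar> * C^3" by (rule mult_left_mono) (use assms in \<open>auto intro: power_mono\<close>)
    also have "\<dots> \<le> (1 + x^2) * C^3"
    proof (rule mult_right_mono)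
      have "0 \<le> (\<bar>x\<bar> - 1)^2" by simp
      then have "0 \<le> \<bar>x\<bar>^2 + 1 - 2 * \<bar>x\<bar>" unfolding power2_diff by simp
      moreover have "\<bar>x\<bar>^2 = x^2" by simp
      moreover have "0 \<le> x^2" by simp
      ultimately show "\<bar>x\<bar> \<le> 1 + x^2" by linarith
    qed (use C0 in simp)
    finally show ?thesis by (simp add: algebra_simps abs_le_iff)
  qed
  moreover have "d^4 \<le> C^4"
  proof -
    have "\<bar>d\<bar>^4 \<le> C^4" by (rule power_mono[OF assms abs_ge_zero])
    then show ?thesis by (simp add: power_even_abs)
  qed
  ultimately show ?thesis unfolding e by (simp add: algebra_simps)
qed

context
  fixes m :: nat and a a' :: real and h :: "int \<Rightarrow> real" and \<mu> Hb :: real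
  assumes a0: "0 \<le> a" and a1: "a \<le> 1" and b0: "0 \<le> a'" and b1: "a' \<le> 1"
  and hb: "\<And>s. \<bar>h s\<bar> \<le> Hb"
  and poisson: "\<And>s. parrondo_prob m a a' s * (1 + h (s + 1) - h s - \<mu>)
                   + (1 - parrondo_prob m a a' s) * (-1 + h (s - 1) - h s - \<mu>) = 0"
begin

definition "CC = 1 + 2 * Hb + \<bar>\<mu>\<bar>"

lemma Hb0: "0 \<le> Hb" using hb[of 0] by linarith

lemma CC0: "0 \<le> CC" unfolding CC_def using Hb0 by simp

lemma Mt_Suc: "Mt m a a' h \<mu> (Suc n) \<omega> = Mt m a a' h \<mu> n \<omega> + Dd m a a' h \<mu> n \<omega>"
  unfolding Mt_def Dd_def by (auto simp: algebra_simps)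

lemma Dd_bound: "\<bar>Dd m a a' h \<mu> n \<omega>\<bar> \<le> CC"
  unfolding Dd_def CC_def using hb[of "parrondo_walk m a a' \<omega> n"] hb[of "parrondo_walk m a a' \<omega> n + 1"]
    hb[of "parrondo_walk m a a' \<omega> n - 1"] by (auto simp: abs_le_iff)

lemma Mt_bound: "\<bar>Mt m a a' h \<mu> n \<omega>\<bar> \<le> CC * (real n + 1)"
proof -
  have w: "\<bar>real_of_int (parrondo_walk m a a' \<omega> n)\<bar> \<le> real n"
    using walk_bound[of m a a' \<omega> n] by linarith
  have "\<bar>Mt m a a' h \<mu> n \<omega>\<bar> \<le> real n + Hb + Hb + \<bar>\<mu>\<bar> * real n"
    unfolding Mt_def using w hb[of "parrondo_walk m a a' \<omega> n"] hb[of 0]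
      mult_right_mono[OF abs_ge_self[of \<mu>], of "real n"] mult_right_mono[OF abs_ge_minus_self[of \<mu>], of "real n"]
    by (auto simp: abs_le_iff abs_mult)
  also have "\<dots> \<le> CC * (real n + 1)" unfolding CC_def using Hb0
    by (simp add: algebra_simps)
  finally show ?thesis .
qed

lemma Mt_meas[measurable]: "Mt m a a' h \<mu> n \<in> borel_measurable S.S"
proof -
  have "(\<lambda>\<omega>. (\<lambda>s \<omega>. real_of_int s + h s - h 0 - \<mu> * real n) (parrondo_walk m a a' \<omega> n) \<omega>) \<in> borel_measurable S.S"
    by (rule measurable_compose_countable[OF _ walk_meas]) measurable
  then show ?thesis unfolding Mt_def[abs_def] by simp
qed

lemma Dd_meas[measurable]: "Dd m a a' h \<mu> n \<in> borel_measurable S.S"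
proof -
  have "(\<lambda>\<omega>. (\<lambda>s \<omega>. if \<omega> n < parrondo_prob m a a' s then 1 + h (s + 1) - h s - \<mu>
      else -1 + h (s - 1) - h s - \<mu>) (parrondo_walk m a a' \<omega> n) \<omega>) \<in> borel_measurable S.S"
    by (rule measurable_compose_countable[OF _ walk_meas]) measurable
  then show ?thesis unfolding Dd_def[abs_def] by simp
qed

lemma Mt_dep: "Mt m a a' h \<mu> n (comb_seq n \<omega> \<omega>') = Mt m a a' h \<mu> n \<omega>"
proof -
  have "parrondo_walk m a a' (comb_seq n \<omega> \<omega>') n = parrondo_walk m a a' \<omega> n"
    by (rule walk_dep) (simp add: comb_seq_less)
  then show ?thesis unfolding Mt_def by simp
qed

lemma int_bdd:
  fixes B :: real
  assumes "f \<in> borel_measurable S.S" "\<And>\<omega>. \<bar>f \<omega>\<bar> \<le> B"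
  shows "integrable S.S f"
  by (rule S.P.integrable_const_bound[where B=B]) (use assms in auto)

lemma orth:
  "(\<integral>\<omega>. Mt m a a' h \<mu> n \<omega> ^ k * Dd m a a' h \<mu> n \<omega> \<partial>S.S) = 0"
proof -
  have pb: "\<And>s. 0 \<le> parrondo_prob m a a' s" "\<And>s. parrondo_prob m a a' s \<le> 1"
    using a0 a1 b0 b1 by (auto simp: parrondo_prob_def)
  have "(\<integral>\<omega>. (\<lambda>\<omega>. Mt m a a' h \<mu> n \<omega> ^ k) \<omega> *
      (if \<omega> n < parrondo_prob m a a' (parrondo_walk m a a' \<omega> n)
       then (\<lambda>s. 1 + h (s + 1) - h s - \<mu>) (parrondo_walk m a a' \<omega> n)
       else (\<lambda>s. -1 + h (s - 1) - h s - \<mu>) (parrondo_walk m a a' \<omega> n)) \<partial>S.S) = 0"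
  proof (rule key[where BG="(CC * (real n + 1)) ^ k" and C=CC])
    show "\<bar>Mt m a a' h \<mu> n \<omega> ^ k\<bar> \<le> (CC * (real n + 1)) ^ k" for \<omega>
      unfolding power_abs by (rule power_mono[OF Mt_bound]) simp
    show "\<bar>1 + h (s + 1) - h s - \<mu>\<bar> \<le> CC" for s
      unfolding CC_def using hb[of s] hb[of "s+1"] by (auto simp: abs_le_iff)
    show "\<bar>-1 + h (s - 1) - h s - \<mu>\<bar> \<le> CC" for s
      unfolding CC_def using hb[of s] hb[of "s-1"] by (auto simp: abs_le_iff)
  qed (use pb poisson Mt_dep in auto)
  then show ?thesis unfolding Dd_def by simp
qed

lemma int_Mt_pow: "integrable S.S (\<lambda>\<omega>. Mt m a a' h \<mu> n \<omega> ^ k)"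
  by (rule int_bdd[where B="(CC * (real n + 1)) ^ k"]) (auto simp: power_abs intro: power_mono[OF Mt_bound])

lemma int_Mt_pow_D: "integrable S.S (\<lambda>\<omega>. Mt m a a' h \<mu> n \<omega> ^ k * Dd m a a' h \<mu> n \<omega>)"
proof (rule int_bdd[where B="(CC * (real n + 1)) ^ k * CC"])
  fix \<omega>
  show "\<bar>Mt m a a' h \<mu> n \<omega> ^ k * Dd m a a' h \<mu> n \<omega>\<bar> \<le> (CC * (real n + 1)) ^ k * CC"
    unfolding abs_mult power_abs
    by (rule mult_mono) (use CC0 in \<open>auto intro: power_mono[OF Mt_bound] Dd_bound\<close>)
qed measurable

lemma mom2: "(\<integral>\<omega>. Mt m a a' h \<mu> n \<omega> ^ 2 \<partial>S.S) \<le> CC^2 * real n"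
proof (induction n)
  case 0 then show ?case by (simp add: Mt_def)
next
  case (Suc n)
  let ?M = "Mt m a a' h \<mu> n" and ?D = "Dd m a a' h \<mu> n"
  have i1: "integrable S.S (\<lambda>\<omega>. ?M \<omega> * ?D \<omega>)" using int_Mt_pow_D[of n 1] by simp
  have o1: "(\<integral>\<omega>. ?M \<omega> * ?D \<omega> \<partial>S.S) = 0" using orth[of n 1] by simp
  have pt: "Mt m a a' h \<mu> (Suc n) \<omega> ^ 2 \<le> ?M \<omega> ^ 2 + 2 * (?M \<omega> * ?D \<omega>) + CC^2" for \<omega>
  proof -
    have "?D \<omega> ^ 2 \<le> CC ^ 2" using Dd_bound[of n \<omega>] by (metis abs_ge_zero power2_abs power_mono)
    then show ?thesis unfolding Mt_Suc by (simp add: power2_sum)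
  qed
  have "(\<integral>\<omega>. Mt m a a' h \<mu> (Suc n) \<omega> ^ 2 \<partial>S.S) \<le> (\<integral>\<omega>. ?M \<omega> ^ 2 + 2 * (?M \<omega> * ?D \<omega>) + CC^2 \<partial>S.S)"
    by (rule integral_mono) (auto intro!: int_Mt_pow int_Mt_pow_D pt i1 Bochner_Integration.integrable_add integrable_mult_right)
  also have "\<dots> = (\<integral>\<omega>. ?M \<omega> ^ 2 \<partial>S.S) + 2 * (\<integral>\<omega>. ?M \<omega> * ?D \<omega> \<partial>S.S) + CC^2"
    by (simp add: int_Mt_pow int_Mt_pow_D i1 S.P.prob_space)
  also have "\<dots> \<le> CC^2 * real (Suc n)" using Suc o1 by (simp add: algebra_simps)
  finally show ?case .
qed

definition "KK = (6 * CC^2 + 4 * CC^3) * CC^2 + (4 * CC^3 + CC^4)"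

lemma mom4: "(\<integral>\<omega>. Mt m a a' h \<mu> n \<omega> ^ 4 \<partial>S.S) \<le> KK * real n ^ 2"
proof (induction n)
  case 0 then show ?case by (simp add: Mt_def)
next
  case (Suc n)
  let ?M = "Mt m a a' h \<mu> n" and ?D = "Dd m a a' h \<mu> n"
  define \<alpha> where "\<alpha> = 6 * CC^2 + 4 * CC^3"
  define \<beta> where "\<beta> = 4 * CC^3 + CC^4"
  have pt: "Mt m a a' h \<mu> (Suc n) \<omega> ^ 4 \<le> ?M \<omega> ^ 4 + 4 * (?M \<omega> ^ 3 * ?D \<omega>) + \<alpha> * ?M \<omega> ^ 2 + \<beta>" for \<omega>
    unfolding Mt_Suc \<alpha>_def \<beta>_def by (rule pow4_ineq[OF Dd_bound])
  have "(\<integral>\<omega>. Mt m a a' h \<mu> (Suc n) \<omega> ^ 4 \<partial>S.S) \<le> (\<integral>\<omega>. ?M \<omega> ^ 4 + 4 * (?M \<omega> ^ 3 * ?D \<omega>) + \<alpha> * ?M \<omega> ^ 2 + \<beta> \<partial>S.S)"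
    by (rule integral_mono) (auto intro!: int_Mt_pow int_Mt_pow_D pt Bochner_Integration.integrable_add integrable_mult_right)
  also have "\<dots> = (\<integral>\<omega>. ?M \<omega> ^ 4 \<partial>S.S) + 4 * (\<integral>\<omega>. ?M \<omega> ^ 3 * ?D \<omega> \<partial>S.S) + \<alpha> * (\<integral>\<omega>. ?M \<omega> ^ 2 \<partial>S.S) + \<beta>"
    by (simp add: int_Mt_pow int_Mt_pow_D S.P.prob_space)
  also have "\<dots> \<le> KK * real n ^ 2 + 0 + \<alpha> * (CC^2 * real n) + \<beta>"
    using Suc orth[of n 3] mom2[of n] CC0 by (intro add_mono mult_left_mono) (auto simp: \<alpha>_def)
  also have "\<dots> \<le> KK * real (Suc n) ^ 2"
  proof -
    have "\<alpha> * CC^2 \<le> KK" "\<beta> \<le> KK" "0 \<le> \<beta>" unfolding KK_def \<alpha>_def \<beta>_def using CC0 by auto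
    then have "\<alpha> * (CC^2 * real n) \<le> KK * real n" by (metis mult.assoc mult_right_mono of_nat_0_le_iff)
    moreover have "0 \<le> KK * real n" using \<open>0 \<le> \<beta>\<close> \<open>\<beta> \<le> KK\<close> by simp
    ultimately show ?thesis using \<open>\<beta> \<le> KK\<close> by (simp add: power2_eq_square algebra_simps)
  qed
  finally show ?case .
qed

lemma KK0: "0 \<le> KK" unfolding KK_def using CC0 by simp

lemma ae_eps:
  assumes e: "0 < \<epsilon>"
  shows "AE \<omega> in S.S. eventually (\<lambda>n. \<bar>Mt m a a' h \<mu> (Suc n) \<omega>\<bar> < \<epsilon> * real (Suc n)) sequentially"
proof -
  define A where "A n = {\<omega> \<in> space S.S. (\<epsilon> * real (Suc n)) ^ 4 \<le> Mt m a a' h \<mu> (Suc n) \<omega> ^ 4}" for n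
  have Am[measurable]: "A n \<in> sets S.S" for n unfolding A_def by measurable
  have mA: "measure S.S (A n) \<le> KK / \<epsilon> ^ 4 * inverse (real (Suc n) ^ 2)" for n
  proof -
    have "measure S.S (A n) \<le> (\<integral>\<omega>. Mt m a a' h \<mu> (Suc n) \<omega> ^ 4 \<partial>S.S) / (\<epsilon> * real (Suc n)) ^ 4"
      unfolding A_def by (rule integral_Markov_inequality_measure[where A="space S.S"]) (use e in \<open>auto intro: int_Mt_pow\<close>)
    also have "\<dots> \<le> KK * real (Suc n) ^ 2 / (\<epsilon> * real (Suc n)) ^ 4"
      by (rule divide_right_mono[OF mom4]) simp
    also have "\<dots> = KK / \<epsilon> ^ 4 * inverse (real (Suc n) ^ 2)"
      by (rule aux_div) (use e in auto)
    finally show ?thesis .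
  qed
  have sg: "summable (\<lambda>n. KK / \<epsilon> ^ 4 * inverse (real (Suc n) ^ 2))"
  proof -
    have "summable (\<lambda>n. inverse (of_nat n ^ 2 :: real))" by (rule inverse_power_summable) simp
    then have "summable (\<lambda>n. inverse (real (Suc n) ^ 2))"
      using summable_Suc_iff[where f="\<lambda>n. inverse (of_nat n ^ 2 :: real)"] by simp
    then show ?thesis by (rule summable_mult)
  qed
  have "summable (\<lambda>n. measure S.S (A n))"
    by (rule summable_comparison_test[OF _ sg]) (use mA in auto)
  then have "AE x in S.S. eventually (\<lambda>n. x \<in> space S.S - A n) sequentially"
    by (intro borel_cantelli_AE1) (auto simp: S.P.emeasure_finite less_top[symmetric])
  then show ?thesis
  proof (rule AE_mp, intro AE_I2 impI)
    fix \<omega> assume sp: "\<omega> \<in> space S.S"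
    assume "eventually (\<lambda>n. \<omega> \<in> space S.S - A n) sequentially"
    then show "eventually (\<lambda>n. \<bar>Mt m a a' h \<mu> (Suc n) \<omega>\<bar> < \<epsilon> * real (Suc n)) sequentially"
    proof (rule eventually_mono)
      fix n assume "\<omega> \<in> space S.S - A n"
      then have "\<bar>Mt m a a' h \<mu> (Suc n) \<omega>\<bar> ^ 4 < (\<epsilon> * real (Suc n)) ^ 4"
        using sp unfolding A_def by (simp add: power_even_abs not_le)
      then show "\<bar>Mt m a a' h \<mu> (Suc n) \<omega>\<bar> < \<epsilon> * real (Suc n)"
        by (rule power_less_imp_less_base) (use e in simp)
    qed
  qed
qed

lemma slln: "AE \<omega> in S.S. (\<lambda>n. real_of_int (parrondo_walk m a a' \<omega> n) / real n) \<longlonglongrightarrow> \<mu>"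
proof -
  have "\<forall>j::nat. AE \<omega> in S.S. eventually (\<lambda>n. \<bar>Mt m a a' h \<mu> (Suc n) \<omega>\<bar> < inverse (real (Suc j)) * real (Suc n)) sequentially"
    by (intro allI ae_eps) simp
  then have "AE \<omega> in S.S. \<forall>j::nat. eventually (\<lambda>n. \<bar>Mt m a a' h \<mu> (Suc n) \<omega>\<bar> < inverse (real (Suc j)) * real (Suc n)) sequentially"
    by (subst AE_all_countable) 
  then show ?thesis
  proof (rule AE_mp, intro AE_I2 impI)
    fix \<omega> assume H: "\<forall>j::nat. eventually (\<lambda>n. \<bar>Mt m a a' h \<mu> (Suc n) \<omega>\<bar> < inverse (real (Suc j)) * real (Suc n)) sequentially"
    let ?M = "\<lambda>n. Mt m a a' h \<mu> n \<omega>"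
    let ?w = "\<lambda>n. real_of_int (parrondo_walk m a a' \<omega> n)"
    have M0: "(\<lambda>n. ?M n / real n) \<longlonglongrightarrow> 0"
    proof (rule tendstoI)
      fix r :: real assume r: "0 < r"
      obtain j where j: "inverse (real (Suc j)) < r" using reals_Archimedean[OF r] by auto
      have "eventually (\<lambda>n. dist (?M (Suc n) / real (Suc n)) 0 < r) sequentially"
        using H[rule_format, of j]
      proof (rule eventually_mono)
        fix n assume "\<bar>?M (Suc n)\<bar> < inverse (real (Suc j)) * real (Suc n)"
        then have "\<bar>?M (Suc n)\<bar> / real (Suc n) < inverse (real (Suc j))"
          by (simp add: divide_less_eq del: of_nat_Suc)
        then show "dist (?M (Suc n) / real (Suc n)) 0 < r" using j by simp
      qed
      then show "eventually (\<lambda>n. dist (?M n / real n) 0 < r) sequentially"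
        by (subst eventually_sequentially_Suc[symmetric])
    qed
    have "(\<lambda>n. ?w n / real n - \<mu>) \<longlonglongrightarrow> 0"
    proof (rule Lim_null_comparison)
      show "eventually (\<lambda>n. norm (?w n / real n - \<mu>) \<le> \<bar>?M n / real n\<bar> + 2 * Hb / real n) sequentially"
        using eventually_gt_at_top[of "0::nat"]
      proof (rule eventually_mono)
        fix n :: nat assume n: "0 < n"
        have "?w n / real n - \<mu> = (?M n - h (parrondo_walk m a a' \<omega> n) + h 0) / real n"
          using n unfolding Mt_def by (simp add: field_simps)
        also have "\<bar>\<dots>\<bar> \<le> \<bar>?M n / real n\<bar> + 2 * Hb / real n"
        proof -
          have "\<bar>?M n - h (parrondo_walk m a a' \<omega> n) + h 0\<bar> \<le> \<bar>?M n\<bar> + 2 * Hb"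
            using hb[of "parrondo_walk m a a' \<omega> n"] hb[of 0] abs_ge_self[of "?M n"] abs_ge_minus_self[of "?M n"]
            by (simp add: abs_le_iff)
          then have "\<bar>?M n - h (parrondo_walk m a a' \<omega> n) + h 0\<bar> / real n \<le> (\<bar>?M n\<bar> + 2 * Hb) / real n"
            by (rule divide_right_mono) simp
          then show ?thesis by (metis abs_divide abs_of_nat add_divide_distrib)
        qed
        finally show "norm (?w n / real n - \<mu>) \<le> \<bar>?M n / real n\<bar> + 2 * Hb / real n" by simp
      qed
      show "(\<lambda>n. \<bar>?M n / real n\<bar> + 2 * Hb / real n) \<longlonglongrightarrow> 0"
        using tendsto_add[OF tendsto_rabs_zero[OF M0] lim_const_over_n[of "2 * Hb"]] by simp
    qed
    then show "(\<lambda>n. ?w n / real n) \<longlonglongrightarrow> \<mu>"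
      using tendsto_add[OF _ tendsto_const[of \<mu>]] by fastforce
  qed
qed

end


definition hf :: "real \<Rightarrow> real \<Rightarrow> int \<Rightarrow> real" where
  "hf H1 H2 s = (if s mod 3 = 0 then 0 else if s mod 3 = 1 then H1 else H2)"

lemma hf_bound: "\<bar>hf H1 H2 s\<bar> \<le> \<bar>H1\<bar> + \<bar>H2\<bar>"
  unfolding hf_def by auto

lemma poisson3:
  assumes eq0: "a' * (1 + H1 - 0 - \<mu>) + (1 - a') * (-1 + H2 - 0 - \<mu>) = 0"
    and eq1: "a * (1 + H2 - H1 - \<mu>) + (1 - a) * (-1 + 0 - H1 - \<mu>) = 0"
    and eq2: "a * (1 + 0 - H2 - \<mu>) + (1 - a) * (-1 + H1 - H2 - \<mu>) = 0"
  shows "parrondo_prob 3 a a' s * (1 + hf H1 H2 (s + 1) - hf H1 H2 s - \<mu>)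
       + (1 - parrondo_prob 3 a a' s) * (-1 + hf H1 H2 (s - 1) - hf H1 H2 s - \<mu>) = 0"
proof -
  have "s mod 3 = 0 \<or> s mod 3 = 1 \<or> s mod 3 = 2" by presburger
  moreover
  { assume h: "s mod 3 = 0"
    then have "(s + 1) mod 3 = 1" "(s - 1) mod 3 = 2" "int 3 dvd s" by presburger+
    then have ?thesis using eq0 h unfolding hf_def parrondo_prob_def by simp }
  moreover
  { assume h: "s mod 3 = 1"
    then have "(s + 1) mod 3 = 2" "(s - 1) mod 3 = 0" "\<not> int 3 dvd s" by presburger+
    then have ?thesis using eq1 h unfolding hf_def parrondo_prob_def by simp }
  moreover
  { assume h: "s mod 3 = 2"
    then have "(s + 1) mod 3 = 0" "(s - 1) mod 3 = 1" "\<not> int 3 dvd s" by presburger+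
    then have ?thesis using eq2 h unfolding hf_def parrondo_prob_def by simp }
  ultimately show ?thesis by metis
qed

lemma game_limit:
  assumes "0 \<le> a" "a \<le> 1" "0 \<le> a'" "a' \<le> 1"
    and eq0: "a' * (1 + Xa - 0 - \<mu>) + (1 - a') * (-1 + Xb - 0 - \<mu>) = 0"
    and eq1: "a * (1 + Xb - Xa - \<mu>) + (1 - a) * (-1 + 0 - Xa - \<mu>) = 0"
    and eq2: "a * (1 + 0 - Xb - \<mu>) + (1 - a) * (-1 + Xa - Xb - \<mu>) = 0"
  shows "AE \<omega> in unif_seq_space. (\<lambda>n. real_of_int (parrondo_walk 3 a a' \<omega> n) / real n) \<longlonglongrightarrow> \<mu>"
  unfolding unif_eq
  by (rule slln[where h="hf Xa Xb" and Hb="\<bar>Xa\<bar> + \<bar>Xb\<bar>"])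
     (use assms hf_bound poisson3[OF eq0 eq1 eq2] in auto)

lemma game_losing:
  assumes "AE \<omega> in unif_seq_space. (\<lambda>n. real_of_int (parrondo_walk m a a' \<omega> n) / real n) \<longlonglongrightarrow> \<mu>"
    and "\<mu> < 0"
  shows "losing_game m a a'"
  unfolding losing_game_def using assms(1) by (rule eventually_mono) (use assms(2) in auto)

lemma game_winning:
  assumes "AE \<omega> in unif_seq_space. (\<lambda>n. real_of_int (parrondo_walk m a a' \<omega> n) / real n) \<longlonglongrightarrow> \<mu>"
    and "0 < \<mu>"
  shows "winning_game m a a'"
  unfolding winning_game_def using assms(1) by (rule eventually_mono) (use assms(2) in auto)

theorem corollary4p2:
  shows "\<exists>(m::nat) (\<beta>::real) (\<beta>'::real) (p::real) (p'::real) (\<pi>::real).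
     m \<ge> 3 \<and> \<beta> \<in> {0..1} \<and> \<beta>' \<in> {0..1} \<and> p \<in> {0..1} \<and> p' \<in> {0..1} \<and>
     \<pi> \<in> {0<..<1} \<and>
     losing_game m \<beta> \<beta>' \<and> losing_game m p p' \<and>
     winning_game m (\<pi> * p + (1 - \<pi>) * \<beta>) (\<pi> * p' + (1 - \<pi>) * \<beta>')"
proof -
  have g1: "losing_game 3 (49/100) (49/100)"
    by (rule game_losing[OF game_limit[where Xa=0 and Xb=0 and \<mu>="-1/50"]]) simp_all
  have g2: "losing_game 3 (37/50) (9/100)"
    by (rule game_losing[OF game_limit[where Xa="1885/1759" and Xb="1365/1759" and \<mu>="-1529/87950"]]) simp_all
  have g3: "winning_game 3 (123/200) (29/100)"
    by (rule game_winning[OF game_limit[where Xa="2210/4663" and Xb="36010/88597" and \<mu>="26673/4429850"]]) simp_all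
  have e1: "1/2 * (37/50) + (1 - 1/2) * (49/100) = (123/200::real)" by simp
  have e2: "1/2 * (9/100) + (1 - 1/2) * (49/100) = (29/100::real)" by simp
  show ?thesis
    by (rule exI[of _ 3], rule exI[of _ "49/100"], rule exI[of _ "49/100"], rule exI[of _ "37/50"],
        rule exI[of _ "9/100"], rule exI[of _ "1/2"]) (simp add: e1 e2 g1 g2 g3)
qed

end
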